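(* For $k\in\{1,\dots,2n\}$ and $m\in\mathbb{Z}$, let \[ M_k(m)=\{X_{i_1}(k+m-1)X_{i_2}(k+m-2)\cdots X_{i_k}(m)\;:\; i_j\in\mathcal{I},\ i_1<i_2<\cdots<i_k\}. \] Then, as crystals, \[ M_k(m)\cong\begin{cases}\mathcal{M}(Y_k(m)) & \text{if } k\in\{1,\dots,n\},\\ \mathcal{M}(Y_{2n-k}(m-n+k)) & \text{if } k\in\{n+1,\dots,2n\}.\end{cases} \]
   Context: Fix $n\ge 2$ and type $C_n$ with $I=\{1,\dots,n\}$ and fundamental weights $\Lambda_i$. Let $\mathcal{M}$ be the set of Laurent monomials $M=\prod_{i\in I,k\in\mathbb{Z}}Y_i(k)^{y_i(k)}$ ($y_i(k)\in\mathbb{Z}$, finitely many nonzero); put $Y_0(k)=Y_{n+1}(k)=1$, $A_i(k)=Y_i(k)Y_i(k+1)Y_{i-1}(k+1)^{-1}Y_{i+1}(k)^{-1}$ ($i\ne n$), $A_n(k)=Y_n(k)Y_n(k+1)Y_{n-1}(k+1)^{-2}$. Crystal structure: $\mathrm{wt}(M)=\sum_i(\sum_k y_i(k))\Lambda_i$, $\varphi_i(M)=\max_k\sum_{j\le k}y_i(j)$, $\varepsilon_i(M)=\max_k(-\sum_{j>k}y_i(j))$; $\tilde f_iM=0$ if $\varphi_i(M)=0$, else $A_i(n_f)^{-1}M$ with $n_f=\min\{k:\varphi_i(M)=\sum_{j\le k}y_i(j)\}$; $\tilde e_iM=0$ if $\varepsilon_i(M)=0$, else $A_i(n_e)M$ with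 $n_e=\max\{k:\varphi_i(M)=\sum_{j\le k}y_i(j)\}$. For a highest weight monomial $Y$ ($\varepsilon_i(Y)=0$ for all $i$), $\mathcal{M}(Y)$ is the connected component of $\mathcal{M}$ containing $Y$ (with $\mathcal{M}(Y_0(\cdot))=\mathcal{M}(1)=\{1\}$). The $X$-variables are $X_i(k)=Y_i(k)Y_{i-1}(k+1)^{-1}$ for $1\le i\le n$ and $X_{\bar i}(k)=Y_{i-1}(k+n-i+1)Y_i(k+n-i+1)^{-1}$ for $1\le i\le n$. The alphabet $\mathcal{I}=\{1,\dots,n,\bar n,\dots,\bar 1\}$ is totally ordered by $1<2<\cdots<n<\bar n<\cdots<\bar 2<\bar 1$. *)

theory Defs
  imports Main
begin

text \<open>Laurent monomials in the variables Y_i(k), i in {1..n}, k in Z, are represented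
by their exponent functions y :: nat => int => int (y i k = exponent of Y_i(k)).  The type C_n data n is an
explicit parameter.\<close>

type_synonym mono = "nat \<Rightarrow> int \<Rightarrow> int"

definition mmul :: "mono \<Rightarrow> mono \<Rightarrow> mono" where
  "mmul y z = (\<lambda>a b. y a b + z a b)"

definition minv :: "mono \<Rightarrow> mono" where
  "minv y = (\<lambda>a b. - y a b)"

definition mone :: mono where
  "mone = (\<lambda>a b. 0)"

text \<open>Y_i(k); Y_0(k) = Y_{n+1}(k) = 1 (and any index outside 1..n gives 1).\<close>
definition Ymon :: "nat \<Rightarrow> nat \<Rightarrow> int \<Rightarrow> mono" where
  "Ymon n i k = (\<lambda>a b. if 1 \<le> i \<and> i \<le> n \<and> a = i \<and> b = k then 1 else 0)"

definition valid_mono :: "nat \<Rightarrow> mono \<Rightarrow> bool" where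
  "valid_mono n y \<longleftrightarrow> finite {(a, b). y a b \<noteq> 0} \<and> (\<forall>a b. y a b \<noteq> 0 \<longrightarrow> 1 \<le> a \<and> a \<le> n)"

definition Amon :: "nat \<Rightarrow> nat \<Rightarrow> int \<Rightarrow> mono" where
  "Amon n i k =
    (if i = n then
       mmul (mmul (Ymon n n k) (Ymon n n (k + 1)))
            (minv (mmul (Ymon n (n - 1) (k + 1)) (Ymon n (n - 1) (k + 1))))
     else
       mmul (mmul (Ymon n i k) (Ymon n i (k + 1)))
            (minv (mmul (Ymon n (i - 1) (k + 1)) (Ymon n (i + 1) k))))"

text \<open>weight: coefficient of Lambda_i in wt(M)\<close>
definition wt :: "mono \<Rightarrow> nat \<Rightarrow> int" where
  "wt y i = sum (y i) {j. y i j \<noteq> 0}"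

definition psum :: "mono \<Rightarrow> nat \<Rightarrow> int \<Rightarrow> int" where
  "psum y i k = sum (y i) {j. j \<le> k \<and> y i j \<noteq> 0}"

definition phi :: "mono \<Rightarrow> nat \<Rightarrow> int" where
  "phi y i = Max (range (psum y i))"

definition eps :: "mono \<Rightarrow> nat \<Rightarrow> int" where
  "eps y i = Max (range (\<lambda>k. - sum (y i) {j. k < j \<and> y i j \<noteq> 0}))"

definition nf :: "mono \<Rightarrow> nat \<Rightarrow> int" where
  "nf y i = (LEAST k. phi y i = psum y i k)"

definition ne :: "mono \<Rightarrow> nat \<Rightarrow> int" where
  "ne y i = (GREATEST k. phi y i = psum y i k)"

text \<open>Kashiwara operators; None represents 0.\<close>
definition ftil :: "nat \<Rightarrow> nat \<Rightarrow> mono \<Rightarrow> mono option" where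
  "ftil n i y = (if phi y i = 0 then None else Some (mmul (minv (Amon n i (nf y i))) y))"

definition etil :: "nat \<Rightarrow> nat \<Rightarrow> mono \<Rightarrow> mono option" where
  "etil n i y = (if eps y i = 0 then None else Some (mmul (Amon n i (ne y i)) y))"

inductive_set component :: "nat \<Rightarrow> mono \<Rightarrow> mono set" for n :: nat and Y :: mono where
  base: "Y \<in> component n Y"
| fstep: "M \<in> component n Y \<Longrightarrow> i \<in> {1..n} \<Longrightarrow> ftil n i M = Some M' \<Longrightarrow> M' \<in> component n Y"
| estep: "M \<in> component n Y \<Longrightarrow> i \<in> {1..n} \<Longrightarrow> etil n i M = Some M' \<Longrightarrow> M' \<in> component n Y"

text \<open>X-variables.  The alphabet 1 < ... < n < nbar < ... < 1bar is encoded by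
1, ..., 2n: letter a <= n is the unbarred a, letter a > n is bar(2n+1-a).\<close>
definition Xmon :: "nat \<Rightarrow> nat \<Rightarrow> int \<Rightarrow> mono" where
  "Xmon n i k = mmul (Ymon n i k) (minv (Ymon n (i - 1) (k + 1)))"

definition Xbar :: "nat \<Rightarrow> nat \<Rightarrow> int \<Rightarrow> mono" where
  "Xbar n i k = mmul (Ymon n (i - 1) (k + int n - int i + 1)) (minv (Ymon n i (k + int n - int i + 1)))"

definition Xlet :: "nat \<Rightarrow> nat \<Rightarrow> int \<Rightarrow> mono" where
  "Xlet n a k = (if a \<le> n then Xmon n a k else Xbar n (2 * n + 1 - a) k)"

definition Mk :: "nat \<Rightarrow> nat \<Rightarrow> int \<Rightarrow> mono set" where
  "Mk n k m = {(\<lambda>a b. \<Sum>j\<in>{1..k}. Xlet n (ii j) (int k + m - int j) a b) | ii.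
      strict_mono_on {1..k} ii \<and> (\<forall>j\<in>{1..k}. ii j \<in> {1..2 * n})}"

definition closed_sub :: "nat \<Rightarrow> mono set \<Rightarrow> bool" where
  "closed_sub n S \<longleftrightarrow> (\<forall>M\<in>S. \<forall>i\<in>{1..n}.
      (\<forall>M'. ftil n i M = Some M' \<longrightarrow> M' \<in> S) \<and> (\<forall>M'. etil n i M = Some M' \<longrightarrow> M' \<in> S))"

definition crystal_iso :: "nat \<Rightarrow> mono set \<Rightarrow> mono set \<Rightarrow> bool" where
  "crystal_iso n S T \<longleftrightarrow> closed_sub n S \<and> closed_sub n T \<and>
    (\<exists>\<Phi>. bij_betw \<Phi> S T \<and>
      (\<forall>M\<in>S. \<forall>i\<in>{1..n}.
         wt (\<Phi> M) i = wt M i \<and> phi (\<Phi> M) i = phi M i \<and> eps (\<Phi> M) i = eps M i \<and>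
         ftil n i (\<Phi> M) = map_option \<Phi> (ftil n i M) \<and>
         etil n i (\<Phi> M) = map_option \<Phi> (etil n i M)))"

end

theory Submission
  imports Defs
begin


definition PS :: "(int \<Rightarrow> int) \<Rightarrow> int \<Rightarrow> int" where
  "PS r k = sum r {j. j \<le> k \<and> r j \<noteq> 0}"
definition WT :: "(int \<Rightarrow> int) \<Rightarrow> int" where
  "WT r = sum r {j. r j \<noteq> 0}"

lemma psum_PS: "psum y i = PS (y i)" by (simp add: psum_def PS_def fun_eq_iff)
lemma wt_WT: "wt y i = WT (y i)" by (simp add: wt_def WT_def)

lemma sum_supp_eq:
  assumes "finite F" "\<And>b. b \<notin> F \<Longrightarrow> r b = 0"
  shows "sum r {j. Q j \<and> r j \<noteq> 0} = sum r {j\<in>F. Q j}"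
proof -
  have "sum r {j. Q j \<and> r j \<noteq> 0} = sum r {j\<in>F. Q j}"
    by (rule sum.mono_neutral_cong_left) (use assms in auto)
  thus ?thesis .
qed

lemma PS_F: assumes "finite F" "\<And>b. b \<notin> F \<Longrightarrow> r b = 0"
  shows "PS r k = sum r {j\<in>F. j \<le> k}"
  using sum_supp_eq[OF assms, where Q="\<lambda>j. j \<le> k"] by (simp add: PS_def)

lemma WT_F: assumes "finite F" "\<And>b. b \<notin> F \<Longrightarrow> r b = 0"
  shows "WT r = sum r F"
  using sum_supp_eq[OF assms, where Q="\<lambda>j. True"] by (simp add: WT_def)

lemma tail_F: assumes "finite F" "\<And>b. b \<notin> F \<Longrightarrow> r b = 0"
  shows "sum r {j. k < j \<and> r j \<noteq> 0} = WT r - PS r k"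
proof -
  have "sum r {j. k < j \<and> r j \<noteq> 0} = sum r {j\<in>F. k < j}"
    using sum_supp_eq[OF assms, where Q="\<lambda>j. k < j"] by simp
  moreover have "sum r F = sum r {j\<in>F. j \<le> k} + sum r {j\<in>F. k < j}"
  proof -
    have "F = {j\<in>F. j \<le> k} \<union> {j\<in>F. k < j}" by auto
    moreover have "{j\<in>F. j \<le> k} \<inter> {j\<in>F. k < j} = {}" by auto
    ultimately show ?thesis using assms(1)
      by (metis (no_types, lifting) finite_Un sum.union_disjoint)
  qed
  ultimately show ?thesis using PS_F[OF assms] WT_F[OF assms] by simp
qed

lemma PS_step: assumes "finite F" "\<And>b. b \<notin> F \<Longrightarrow> r b = 0"
  shows "PS r k = PS r (k - 1) + r k"
proof -
  have "{j\<in>F. j \<le> k} = (if k \<in> F then insert k {j\<in>F. j \<le> k - 1} else {j\<in>F. j \<le> k - 1})"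
    by (cases "k \<in> F") (auto, (metis order.not_eq_order_implies_strict)+)
  thus ?thesis using PS_F[OF assms] assms by (auto simp: sum.insert)
qed

lemma supp_bounds:
  assumes "finite (F::int set)"
  obtains L H where "\<And>j. j \<in> F \<Longrightarrow> L < j \<and> j < H"
proof -
  have "\<And>j. j \<in> F \<Longrightarrow> Min (insert 0 F) - 1 < j \<and> j < Max (insert 0 F) + 1"
  proof -
    fix j assume "j \<in> F"
    hence "Min (insert 0 F) \<le> j" "j \<le> Max (insert 0 F)" using assms by auto
    thus "Min (insert 0 F) - 1 < j \<and> j < Max (insert 0 F) + 1" by simp
  qed
  thus ?thesis using that by blast
qed

lemma int_Least:
  fixes Q :: "int \<Rightarrow> bool"
  assumes "Q x" "\<And>y. Q y \<Longrightarrow> L \<le> y"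
  shows "Q (Least Q) \<and> (\<forall>y. Q y \<longrightarrow> Least Q \<le> y)"
proof -
  let ?S = "{y. L \<le> y \<and> y \<le> x \<and> Q y}"
  have fin: "finite ?S" by (rule finite_subset[of _ "{L..x}"]) auto
  have xS: "x \<in> ?S" using assms by auto
  define mm where "mm = Min ?S"
  have mS: "mm \<in> ?S" unfolding mm_def using Min_in[OF fin] xS by blast
  have mle: "\<And>y. Q y \<Longrightarrow> mm \<le> y"
  proof -
    fix y assume "Q y"
    show "mm \<le> y"
    proof (cases "y \<le> x")
      case True thus ?thesis unfolding mm_def using fin assms(2)[OF \<open>Q y\<close>] \<open>Q y\<close> by (intro Min_le) auto
    next
      case False thus ?thesis using mS by auto
    qed
  qed
  have "Least Q = mm" by (rule Least_equality) (use mS mle in auto)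
  thus ?thesis using mS mle by auto
qed

lemma int_Greatest:
  fixes Q :: "int \<Rightarrow> bool"
  assumes "Q x" "\<And>y. Q y \<Longrightarrow> y \<le> H"
  shows "Q (Greatest Q) \<and> (\<forall>y. Q y \<longrightarrow> y \<le> Greatest Q)"
proof -
  let ?S = "{y. x \<le> y \<and> y \<le> H \<and> Q y}"
  have fin: "finite ?S" by (rule finite_subset[of _ "{x..H}"]) auto
  have xS: "x \<in> ?S" using assms by auto
  define mm where "mm = Max ?S"
  have mS: "mm \<in> ?S" unfolding mm_def using Max_in[OF fin] xS by blast
  have mle: "\<And>y. Q y \<Longrightarrow> y \<le> mm"
  proof -
    fix y assume "Q y"
    show "y \<le> mm"
    proof (cases "x \<le> y")
      case True thus ?thesis unfolding mm_def using fin assms(2)[OF \<open>Q y\<close>] \<open>Q y\<close> by (intro Max_ge) auto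
    next
      case False thus ?thesis using mS by auto
    qed
  qed
  have "Greatest Q = mm" by (rule Greatest_equality) (use mS mle in auto)
  thus ?thesis using mS mle by auto
qed

locale frow =
  fixes r :: "int \<Rightarrow> int" and F :: "int set"
  assumes finF: "finite F" and suppF: "\<And>b. b \<notin> F \<Longrightarrow> r b = 0"
begin

lemma bounds: obtains L H where "\<And>k. k \<le> L \<Longrightarrow> PS r k = 0" "\<And>k. H \<le> k \<Longrightarrow> PS r k = WT r" "L \<le> H"
proof -
  obtain L H where LH: "\<And>j. j \<in> F \<Longrightarrow> L < j \<and> j < H" using supp_bounds[OF finF] by blast
  have 1: "PS r k = 0" if "k \<le> L" for k
  proof -
    have e: "{j\<in>F. j \<le> k} = {}" using LH that by force
    have "PS r k = sum r {j\<in>F. j \<le> k}" by (rule PS_F[of F r, OF finF suppF])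
    also have "\<dots> = 0" unfolding e by simp
    finally show ?thesis .
  qed
  have 2: "PS r k = WT r" if "H \<le> k" for k
  proof -
    have "{j\<in>F. j \<le> k} = F" using LH that by force
    thus ?thesis using PS_F[of F r, OF finF suppF] WT_F[of F r, OF finF suppF] by simp
  qed
  show ?thesis using that[of L "max L H"] 1 2 by auto
qed

lemma range_fin: "finite (range (PS r))"
proof -
  obtain L H where LH: "\<And>k. k \<le> L \<Longrightarrow> PS r k = 0" "\<And>k. H \<le> k \<Longrightarrow> PS r k = WT r" "L \<le> H"
    using bounds by blast
  have "range (PS r) \<subseteq> PS r ` {L..H}"
  proof
    fix v assume "v \<in> range (PS r)"
    then obtain k where k: "v = PS r k" by auto
    show "v \<in> PS r ` {L..H}"
    proof (cases "k < L")
      case True thus ?thesis using k LH(1)[of k] LH(1)[of L] LH(3) by force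
    next
      case False
      show ?thesis
      proof (cases "H < k")
        case True thus ?thesis using k LH(2)[of k] LH(2)[of H] LH(3) by force
      next
        case False2: False thus ?thesis using k False by force
      qed
    qed
  qed
  thus ?thesis by (rule finite_subset) simp
qed

lemma Max_ge: "PS r k \<le> Max (range (PS r))"
  using range_fin by (intro Max_ge) auto

lemma Max_in: "\<exists>k. PS r k = Max (range (PS r))"
proof -
  have "Max (range (PS r)) \<in> range (PS r)" using range_fin by (intro Max_in) auto
  thus ?thesis by (metis imageE)
qed

lemma Max_nonneg: "0 \<le> Max (range (PS r))"
proof -
  obtain L H where "\<And>k. k \<le> L \<Longrightarrow> PS r k = 0" using bounds by blast
  thus ?thesis using Max_ge[of L] by auto
qed

lemma epsMax: "Max (range (\<lambda>k. - sum r {j. k < j \<and> r j \<noteq> 0})) = Max (range (PS r)) - WT r"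
proof -
  have eq: "(\<lambda>k. - sum r {j. k < j \<and> r j \<noteq> 0}) = (\<lambda>k. PS r k - WT r)"
    using tail_F[of F r, OF finF suppF] by (auto simp: fun_eq_iff)
  have fin: "finite (range (\<lambda>k. PS r k - WT r))"
  proof -
    have "range (\<lambda>k. PS r k - WT r) = (\<lambda>v. v - WT r) ` range (PS r)" by auto
    thus ?thesis using range_fin by simp
  qed
  obtain k0 where k0: "PS r k0 = Max (range (PS r))" using Max_in by blast
  show ?thesis unfolding eq
  proof (rule Max_eqI[OF fin])
    show "\<And>v. v \<in> range (\<lambda>k. PS r k - WT r) \<Longrightarrow> v \<le> Max (range (PS r)) - WT r"
      using Max_ge by auto
    show "Max (range (PS r)) - WT r \<in> range (\<lambda>k. PS r k - WT r)"
      using rangeI[of "\<lambda>k. PS r k - WT r" k0] k0 by simp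
  qed
qed

end

lemma phi_r: "phi y i = Max (range (PS (y i)))" by (simp add: phi_def psum_PS)

lemma eps_r: assumes "frow (y i) F" shows "eps y i = phi y i - WT (y i)"
  using frow.epsMax[OF assms] by (simp add: eps_def phi_r)

lemma phi_nonneg: assumes "frow (y i) F" shows "0 \<le> phi y i"
  using frow.Max_nonneg[OF assms] by (simp add: phi_r)

lemma phi_ge: assumes "frow (y i) F" shows "PS (y i) k \<le> phi y i"
  using frow.Max_ge[OF assms] by (simp add: phi_r)

lemma nf_facts:
  assumes fr: "frow (y i) F" and pos: "0 < phi y i"
  shows "PS (y i) (nf y i) = phi y i" "\<And>k. k < nf y i \<Longrightarrow> PS (y i) k < phi y i"
        "0 < y i (nf y i)"
proof -
  obtain L H where LH: "\<And>k. k \<le> L \<Longrightarrow> PS (y i) k = 0" using frow.bounds[OF fr] by blast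
  obtain k0 where k0: "PS (y i) k0 = phi y i" using frow.Max_in[OF fr] by (auto simp: phi_r)
  let ?Q = "\<lambda>k. phi y i = psum y i k"
  have "?Q (Least ?Q) \<and> (\<forall>z. ?Q z \<longrightarrow> Least ?Q \<le> z)"
  proof (rule int_Least[of _ k0 "L+1"])
    show "?Q k0" using k0 by (simp add: psum_PS)
    fix z assume "?Q z" thus "L + 1 \<le> z" using LH[of z] pos by (force simp: psum_PS)
  qed
  note R = this
  have H: "phi y i = psum y i (nf y i) \<and> (\<forall>z. phi y i = psum y i z \<longrightarrow> nf y i \<le> z)"
    unfolding nf_def using R by blast
  have Q: "PS (y i) (nf y i) = phi y i" using H by (simp only: psum_PS)
  have mn: "\<And>z. PS (y i) z = phi y i \<Longrightarrow> nf y i \<le> z" using H by (simp only: psum_PS)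
  show "PS (y i) (nf y i) = phi y i" by (rule Q)
  show lt: "\<And>k. k < nf y i \<Longrightarrow> PS (y i) k < phi y i"
    using mn phi_ge[of y i F, OF fr] by (meson le_less not_le)
  have "PS (y i) (nf y i) = PS (y i) (nf y i - 1) + y i (nf y i)"
    using PS_step[of F "y i", OF frow.finF[OF fr] frow.suppF[OF fr]] by blast
  thus "0 < y i (nf y i)" using Q lt[of "nf y i - 1"] by simp
qed

lemma ne_facts:
  assumes fr: "frow (y i) F" and pos: "0 < eps y i"
  shows "PS (y i) (ne y i) = phi y i" "\<And>k. ne y i < k \<Longrightarrow> PS (y i) k < phi y i"
        "y i (ne y i + 1) < 0"
proof -
  obtain L H where LH: "\<And>k. H \<le> k \<Longrightarrow> PS (y i) k = WT (y i)" using frow.bounds[OF fr] by blast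
  obtain k0 where k0: "PS (y i) k0 = phi y i" using frow.Max_in[OF fr] by (auto simp: phi_r)
  have gt: "WT (y i) < phi y i" using pos eps_r[of y i F, OF fr] by simp
  let ?Q = "\<lambda>k. phi y i = psum y i k"
  have "?Q (Greatest ?Q) \<and> (\<forall>z. ?Q z \<longrightarrow> z \<le> Greatest ?Q)"
  proof (rule int_Greatest[of _ k0 "H - 1"])
    show "?Q k0" using k0 by (simp add: psum_PS)
    fix z assume "?Q z" thus "z \<le> H - 1" using LH[of z] gt by (force simp: psum_PS)
  qed
  note R = this
  have H: "phi y i = psum y i (ne y i) \<and> (\<forall>z. phi y i = psum y i z \<longrightarrow> z \<le> ne y i)"
    unfolding ne_def using R by blast
  have Q: "PS (y i) (ne y i) = phi y i" using H by (simp only: psum_PS)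
  have mx: "\<And>z. PS (y i) z = phi y i \<Longrightarrow> z \<le> ne y i" using H by (simp only: psum_PS)
  show "PS (y i) (ne y i) = phi y i" by (rule Q)
  show lt: "\<And>k. ne y i < k \<Longrightarrow> PS (y i) k < phi y i"
    using mx phi_ge[of y i F, OF fr] by (meson le_less not_le)
  have "PS (y i) (ne y i + 1) = PS (y i) (ne y i + 1 - 1) + y i (ne y i + 1)"
    using PS_step[of F "y i", OF frow.finF[OF fr] frow.suppF[OF fr]] by blast
  thus "y i (ne y i + 1) < 0" using Q lt[of "ne y i + 1"] by simp
qed



lemma Amon_row:
  assumes "1 \<le> i" "i \<le> n" "2 \<le> n"
  shows "Amon n i N i b = (if b = N then 1 else 0) + (if b = N + 1 then 1 else 0)"
  using assms unfolding Amon_def mmul_def minv_def Ymon_def by auto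

lemma fe_inverse:
  assumes fr: "frow (y i) F" and pos: "0 < eps y i" and i: "1 \<le> i" "i \<le> n" and n2: "2 \<le> n"
  shows "ftil n i (mmul (Amon n i (ne y i)) y) = Some y"
proof -
  define N where "N = ne y i"
  define y' where "y' = mmul (Amon n i N) y"
  have row: "y' i b = y i b + (if b = N then 1 else 0) + (if b = N + 1 then 1 else 0)" for b
    unfolding y'_def mmul_def using Amon_row[OF i n2] by simp
  let ?F = "F \<union> {N, N+1}"
  have finF': "finite ?F" using frow.finF[OF fr] by simp
  have s1: "\<And>b. b \<notin> ?F \<Longrightarrow> y i b = 0" using frow.suppF[OF fr] by auto
  have s2: "\<And>b. b \<notin> ?F \<Longrightarrow> y' i b = 0" using s1 row by auto
  have fr': "frow (y' i) ?F" using finF' s2 by (simp add: frow_def)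
  have PS': "PS (y' i) k = PS (y i) k + (if N \<le> k then 1 else 0) + (if N + 1 \<le> k then 1 else 0)" for k
  proof -
    have "PS (y' i) k = (\<Sum>j\<in>{j\<in>?F. j \<le> k}. y' i j)" by (rule PS_F[OF finF' s2])
    also have "\<dots> = (\<Sum>j\<in>{j\<in>?F. j \<le> k}. y i j) + (\<Sum>j\<in>{j\<in>?F. j \<le> k}. (if j = N then 1 else 0))
                    + (\<Sum>j\<in>{j\<in>?F. j \<le> k}. (if j = N + 1 then 1 else 0))"
      unfolding row by (simp add: sum.distrib)
    also have "\<dots> = PS (y i) k + (if N \<le> k then 1 else 0) + (if N + 1 \<le> k then 1 else 0)"
      using PS_F[OF finF' s1, where k=k] finF' by (simp add: sum.delta')
    finally show ?thesis .
  qed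
  have Q: "PS (y i) N = phi y i" and lt: "\<And>k. N < k \<Longrightarrow> PS (y i) k < phi y i"
    using ne_facts[OF fr pos] unfolding N_def by auto
  have ge: "\<And>k. PS (y i) k \<le> phi y i" using phi_ge[of y i F, OF fr] .
  have bound: "PS (y' i) k \<le> phi y i + 1" for k
  proof (cases "k < N")
    case True thus ?thesis using PS' ge[of k] by simp
  next
    case False
    show ?thesis
    proof (cases "k = N")
      case True thus ?thesis using PS' Q by simp
    next
      case False2: False
      hence "N < k" using False by simp
      thus ?thesis using PS'[of k] lt[of k] by simp
    qed
  qed
  have att: "PS (y' i) N = phi y i + 1" using PS'[of N] Q by simp
  have phi': "phi y' i = phi y i + 1"
    unfolding phi_r[of y' i]
  proof (rule Max_eqI[OF frow.range_fin[OF fr']])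
    show "\<And>v. v \<in> range (PS (y' i)) \<Longrightarrow> v \<le> phi y i + 1" using bound by auto
    show "phi y i + 1 \<in> range (PS (y' i))" using att by (metis rangeI)
  qed
  have nf': "nf y' i = N"
    unfolding nf_def psum_PS phi'
  proof (rule Least_equality)
    show "phi y i + 1 = PS (y' i) N" using att by simp
    fix z assume "phi y i + 1 = PS (y' i) z"
    thus "N \<le> z" using PS'[of z] ge[of z] by (cases "z < N") auto
  qed
  have "phi y' i \<noteq> 0" using phi' phi_nonneg[of y i F, OF fr] by simp
  hence "ftil n i y' = Some (mmul (minv (Amon n i N)) y')" unfolding ftil_def nf' by simp
  also have "mmul (minv (Amon n i N)) y' = y" unfolding y'_def mmul_def minv_def by (simp add: fun_eq_iff)
  finally show ?thesis unfolding y'_def N_def .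
qed


lemma Xmon_pt: "Xmon n x t a b = (if 1 \<le> x \<and> x \<le> n \<and> a = x \<and> b = t then 1 else 0)
   - (if 1 \<le> x - 1 \<and> x - 1 \<le> n \<and> a = x - 1 \<and> b = t + 1 then 1 else 0)"
  unfolding Xmon_def mmul_def minv_def Ymon_def by (simp only: diff_conv_add_uminus)
lemma Xbar_pt: "Xbar n c t a b = (if 1 \<le> c - 1 \<and> c - 1 \<le> n \<and> a = c - 1 \<and> b = t + int n - int c + 1 then 1 else 0)
   - (if 1 \<le> c \<and> c \<le> n \<and> a = c \<and> b = t + int n - int c + 1 then 1 else 0)"
  unfolding Xbar_def mmul_def minv_def Ymon_def by (simp only: diff_conv_add_uminus)
lemma Xlet_lo: "x \<le> n \<Longrightarrow> Xlet n x t a b = Xmon n x t a b" by (simp add: Xlet_def)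
lemma Xlet_hi: "\<not> x \<le> n \<Longrightarrow> Xlet n x t a b = Xbar n (2 * n + 1 - x) t a b" by (simp add: Xlet_def)
lemma Xlet_zero: assumes "a = 0 \<or> n < a" shows "Xlet n x t a b = 0"
proof (cases "x \<le> n")
  case True thus ?thesis using assms by (auto simp add: Xlet_lo Xmon_pt) 
next
  case False thus ?thesis using assms by (auto simp add: Xlet_hi Xbar_pt) 
qed
lemma Xlet_row:
  assumes "1 \<le> i" "i \<le> n" "1 \<le> x" "x \<le> 2 * n"
  shows "Xlet n x t i b =
     (if x = i \<and> b = t then 1 else 0) - (if x = Suc i \<and> b = t + 1 then 1 else 0)
   + (if i < n \<and> x = 2 * n - i \<and> b = t + int n - int i then 1 else 0)
   - (if i < n \<and> x = Suc (2 * n - i) \<and> b = t + int n - int i + 1 then 1 else 0)"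
proof (cases "x \<le> n")
  case True
  have e1: "(1 \<le> x \<and> x \<le> n \<and> i = x \<and> b = t) = (x = i \<and> b = t)" using assms True by auto
  have e2: "(1 \<le> x - 1 \<and> x - 1 \<le> n \<and> i = x - 1 \<and> b = t + 1) = (x = Suc i \<and> b = t + 1)" using assms True by auto
  have e3: "(i < n \<and> x = 2 * n - i \<and> b = t + int n - int i) = False" using assms True by auto
  have e4: "(i < n \<and> x = Suc (2 * n - i) \<and> b = t + int n - int i + 1) = False" using assms True by auto
  show ?thesis unfolding Xlet_lo[OF True] Xmon_pt e1 e2 e3 e4 by simp
next
  case False
  define c where "c = 2 * n + 1 - x"
  have c: "1 \<le> c" "c \<le> n" "x = 2 * n + 1 - c" "int c = 2 * int n + 1 - int x" using False assms unfolding c_def by auto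
  have X: "Xlet n x t i b = Xbar n c t i b" using False unfolding Xlet_def c_def by simp
  have e1: "(x = i \<and> b = t) = False" using assms False by auto
  have e2: "(1 \<le> c - 1 \<and> c - 1 \<le> n \<and> i = c - 1 \<and> b = t + int n - int c + 1) = (i < n \<and> x = 2 * n - i \<and> b = t + int n - int i)"
    using assms c False by auto
  have e3: "(1 \<le> c \<and> c \<le> n \<and> i = c \<and> b = t + int n - int c + 1)
     = ((x = Suc i \<and> b = t + 1) \<or> (i < n \<and> x = Suc (2 * n - i) \<and> b = t + int n - int i + 1))"
    using assms c False by auto
  have e4: "\<not> ((x = Suc i \<and> b = t + 1) \<and> (i < n \<and> x = Suc (2 * n - i) \<and> b = t + int n - int i + 1))"
    using assms c False by auto
  show ?thesis unfolding X Xbar_pt e1 e2 e3 using e4 by auto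
qed

definition rowof :: "nat \<Rightarrow> nat \<Rightarrow> nat" where
  "rowof n a = (if a \<le> n then a else 2 * n - a)"
definition tau :: "nat \<Rightarrow> nat \<Rightarrow> int \<Rightarrow> int" where
  "tau n a t = (if a \<le> n then t else t + int a - int n)"

lemma Xlet_shift:
  assumes "1 \<le> a" "a < 2 * n" "2 \<le> n"
  shows "Xlet n (Suc a) t = mmul (Xlet n a t) (minv (Amon n (rowof n a) (tau n a t)))"
proof (cases "a < n")
  case True
  have X: "Xlet n (Suc a) t = Xmon n (Suc a) t" "Xlet n a t = Xmon n a t" using True by (auto simp: Xlet_def)
  have R: "rowof n a = a" "tau n a t = t" using True by (auto simp: rowof_def tau_def)
  have A: "Amon n a t = mmul (mmul (Ymon n a t) (Ymon n a (t + 1)))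
            (minv (mmul (Ymon n (a - 1) (t + 1)) (Ymon n (a + 1) t)))" using True by (simp add: Amon_def)
  show ?thesis unfolding X R A Xmon_def mmul_def minv_def by (simp add: fun_eq_iff algebra_simps)
next
  case False
  show ?thesis
  proof (cases "a = n")
    case True
    have X: "Xlet n (Suc a) t = Xbar n n t" "Xlet n a t = Xmon n n t" using True by (auto simp: Xlet_def)
    have R: "rowof n a = n" "tau n a t = t" using True by (auto simp: rowof_def tau_def)
    have A: "Amon n n t = mmul (mmul (Ymon n n t) (Ymon n n (t + 1)))
            (minv (mmul (Ymon n (n - 1) (t + 1)) (Ymon n (n - 1) (t + 1))))" by (simp add: Amon_def)
    show ?thesis unfolding X R A Xmon_def Xbar_def mmul_def minv_def by (simp add: fun_eq_iff algebra_simps)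
  next
    case False2: False
    define i where "i = 2 * n - a"
    have i: "1 \<le> i" "i < n" "a = 2 * n - i" using False False2 assms unfolding i_def by auto
    have X: "Xlet n (Suc a) t = Xbar n i t" "Xlet n a t = Xbar n (Suc i) t" using False False2 i by (auto simp: Xlet_def)
    have R: "rowof n a = i" "tau n a t = t + int n - int i" using False False2 i by (auto simp: rowof_def tau_def)
    have A: "Amon n i (t + int n - int i) = mmul (mmul (Ymon n i (t + int n - int i)) (Ymon n i (t + int n - int i + 1)))
            (minv (mmul (Ymon n (i - 1) (t + int n - int i + 1)) (Ymon n (i + 1) (t + int n - int i))))" using i by (simp add: Amon_def)
    show ?thesis unfolding X R A Xmon_def Xbar_def mmul_def minv_def by (simp add: fun_eq_iff algebra_simps)
  qed
qed



definition col :: "nat \<Rightarrow> nat \<Rightarrow> int \<Rightarrow> (nat \<Rightarrow> nat) \<Rightarrow> mono" where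
  "col n k m ii = (\<lambda>a b. \<Sum>j\<in>{1..k}. Xlet n (ii j) (int k + m - int j) a b)"
definition valid :: "nat \<Rightarrow> nat \<Rightarrow> (nat \<Rightarrow> nat) \<Rightarrow> bool" where
  "valid n k ii \<longleftrightarrow> strict_mono_on {1..k} ii \<and> (\<forall>j\<in>{1..k}. ii j \<in> {1..2 * n})"

lemma Mk_col: "Mk n k m = {col n k m ii | ii. valid n k ii}"
  by (simp add: Mk_def col_def valid_def)

definition pr :: "(nat \<Rightarrow> nat) \<Rightarrow> nat \<Rightarrow> int \<Rightarrow> nat \<Rightarrow> int \<Rightarrow> int \<Rightarrow> int" where
  "pr ii k T x d b = (if \<exists>j\<in>{1..k}. ii j = x \<and> b = T - int j + d then 1 else 0)
      - (if \<exists>j\<in>{1..k}. ii j = Suc x \<and> b = T - int j + d + 1 then 1 else 0)"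

lemma sum_ind:
  assumes "inj_on ii A" "finite A"
  shows "(\<Sum>j\<in>A. if ii j = x \<and> P j then 1 else 0) = (if \<exists>j\<in>A. ii j = x \<and> P j then 1 else (0::int))"
proof (cases "\<exists>j\<in>A. ii j = x \<and> P j")
  case True
  then obtain j0 where j0: "j0 \<in> A" "ii j0 = x" "P j0" by blast
  have "\<And>j. j \<in> A \<Longrightarrow> (ii j = x \<and> P j) = (j = j0)" using j0 assms(1) by (auto dest: inj_onD)
  hence "(\<Sum>j\<in>A. if ii j = x \<and> P j then 1 else (0::int)) = (\<Sum>j\<in>A. if j = j0 then 1 else 0)"
    by (intro sum.cong) auto
  also have "\<dots> = 1" using j0 assms(2) by simp
  finally show ?thesis using True by simp
next
  case False thus ?thesis by (intro trans[OF sum.neutral]) auto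
qed

lemma valid_inj: "valid n k ii \<Longrightarrow> inj_on ii {1..k}"
  unfolding valid_def using strict_mono_on_imp_inj_on by blast

lemma col_row:
  assumes v: "valid n k ii" and i: "1 \<le> i" "i \<le> n"
  shows "col n k m ii i b = pr ii k (int k + m) i 0 b
     + (if i < n then pr ii k (int k + m) (2 * n - i) (int n - int i) b else 0)"
proof -
  define T where "T = int k + m"
  have inj: "inj_on ii {1..k}" using valid_inj[OF v] .
  have rng: "\<And>j. j \<in> {1..k} \<Longrightarrow> 1 \<le> ii j \<and> ii j \<le> 2 * n" using v unfolding valid_def by auto
  have "col n k m ii i b = (\<Sum>j\<in>{1..k}.
      (if ii j = i \<and> b = T - int j + 0 then 1 else 0) - (if ii j = Suc i \<and> b = T - int j + 0 + 1 then 1 else 0)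
    + (if ii j = 2 * n - i \<and> (i < n \<and> b = T - int j + (int n - int i)) then 1 else 0)
    - (if ii j = Suc (2 * n - i) \<and> (i < n \<and> b = T - int j + (int n - int i) + 1) then 1 else 0))"
    unfolding col_def
  proof (rule sum.cong)
    fix j assume j: "j \<in> {1..k}"
    show "Xlet n (ii j) (int k + m - int j) i b = (if ii j = i \<and> b = T - int j + 0 then 1 else 0) - (if ii j = Suc i \<and> b = T - int j + 0 + 1 then 1 else 0)
    + (if ii j = 2 * n - i \<and> (i < n \<and> b = T - int j + (int n - int i)) then 1 else 0)
    - (if ii j = Suc (2 * n - i) \<and> (i < n \<and> b = T - int j + (int n - int i) + 1) then 1 else 0)"
      unfolding Xlet_row[OF i rng[OF j, THEN conjunct1] rng[OF j, THEN conjunct2]] T_def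
      by (simp add: algebra_simps conj_commute conj_left_commute)
  qed simp
  also have "\<dots> = (\<Sum>j\<in>{1..k}. (if ii j = i \<and> b = T - int j + 0 then 1 else 0)) - (\<Sum>j\<in>{1..k}. (if ii j = Suc i \<and> b = T - int j + 0 + 1 then 1 else 0))
    + (\<Sum>j\<in>{1..k}. (if ii j = 2 * n - i \<and> (i < n \<and> b = T - int j + (int n - int i)) then 1 else 0))
    - (\<Sum>j\<in>{1..k}. (if ii j = Suc (2 * n - i) \<and> (i < n \<and> b = T - int j + (int n - int i) + 1) then 1 else 0))"
    by (simp only: sum.distrib sum_subtractf)
  also have "\<dots> = pr ii k T i 0 b + (if i < n then pr ii k T (2 * n - i) (int n - int i) b else 0)"
    unfolding sum_ind[OF inj finite_atLeastAtMost] pr_def by auto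
  finally show ?thesis unfolding T_def .
qed

lemma valid_mono: assumes "valid n k ii" "j \<in> {1..k}" "j' \<in> {1..k}" "j < j'" shows "ii j < ii j'"
  using assms unfolding valid_def strict_mono_on_def by blast

lemma valid_le: assumes "valid n k ii" "j \<in> {1..k}" "j' \<in> {1..k}" "ii j < ii j'" shows "j < j'"
proof (rule ccontr)
  assume "\<not> j < j'"
  hence "j' < j \<or> j' = j" by auto
  thus False using valid_mono[OF assms(1) assms(3) assms(2)] assms(4) by auto
qed

lemma consec:
  assumes v: "valid n k ii" and j: "j \<in> {1..k}" "j' \<in> {1..k}" and x: "ii j = x" "ii j' = Suc x"
  shows "j' = Suc j"
proof -
  have lt: "j < j'" using valid_le[OF v j] x by simp
  show ?thesis
  proof (rule ccontr)
    assume "j' \<noteq> Suc j"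
    hence "Suc j < j'" using lt by simp
    hence "Suc j \<in> {1..k}" using j by auto
    hence "ii j < ii (Suc j)" "ii (Suc j) < ii j'" using valid_mono[OF v] j \<open>Suc j < j'\<close> by auto
    thus False using x by simp
  qed
qed

lemma pr_pos:
  assumes v: "valid n k ii" and p: "0 < pr ii k T x d b"
  shows "\<exists>j\<in>{1..k}. ii j = x \<and> b = T - int j + d \<and> (\<forall>j'\<in>{1..k}. ii j' \<noteq> Suc x)"
proof -
  have A: "\<exists>j\<in>{1..k}. ii j = x \<and> b = T - int j + d" and B: "\<not> (\<exists>j\<in>{1..k}. ii j = Suc x \<and> b = T - int j + d + 1)"
    using p unfolding pr_def by (auto split: if_splits)
  then obtain j where j: "j \<in> {1..k}" "ii j = x" "b = T - int j + d" by blast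
  have "\<forall>j'\<in>{1..k}. ii j' \<noteq> Suc x"
  proof (intro ballI notI)
    fix j' assume j': "j' \<in> {1..k}" "ii j' = Suc x"
    hence "j' = Suc j" using consec[OF v j(1) j'(1) j(2) j'(2)] by simp
    thus False using B j j' by auto
  qed
  thus ?thesis using j by blast
qed

lemma pr_neg:
  assumes v: "valid n k ii" and p: "pr ii k T x d b < 0"
  shows "\<exists>j\<in>{1..k}. ii j = Suc x \<and> b = T - int j + d + 1 \<and> (\<forall>j'\<in>{1..k}. ii j' \<noteq> x)"
proof -
  have A: "\<exists>j\<in>{1..k}. ii j = Suc x \<and> b = T - int j + d + 1" and B: "\<not> (\<exists>j\<in>{1..k}. ii j = x \<and> b = T - int j + d)"
    using p unfolding pr_def by (auto split: if_splits)
  then obtain j where j: "j \<in> {1..k}" "ii j = Suc x" "b = T - int j + d + 1" by blast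
  have "\<forall>j'\<in>{1..k}. ii j' \<noteq> x"
  proof (intro ballI notI)
    fix j' assume j': "j' \<in> {1..k}" "ii j' = x"
    hence "j = Suc j'" using consec[OF v j'(1) j(1) j'(2) j(2)] by simp
    thus False using B j j' by auto
  qed
  thus ?thesis using j by blast
qed

lemma pr_plus:
  assumes v: "valid n k ii" and j: "j \<in> {1..k}" "ii j = x" and no: "\<forall>j'\<in>{1..k}. ii j' \<noteq> Suc x"
  shows "pr ii k T x d b = (if b = T - int j + d then 1 else 0)"
proof -
  have "(\<exists>j'\<in>{1..k}. ii j' = x \<and> b = T - int j' + d) = (b = T - int j + d)"
    using j inj_onD[OF valid_inj[OF v]] by metis
  thus ?thesis unfolding pr_def using no by auto
qed

lemma pr_minus:
  assumes v: "valid n k ii" and j: "j \<in> {1..k}" "ii j = Suc x" and no: "\<forall>j'\<in>{1..k}. ii j' \<noteq> x"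
  shows "pr ii k T x d b = (if b = T - int j + d + 1 then -1 else 0)"
proof -
  have "(\<exists>j'\<in>{1..k}. ii j' = Suc x \<and> b = T - int j' + d + 1) = (b = T - int j + d + 1)"
    using j inj_onD[OF valid_inj[OF v]] by metis
  thus ?thesis unfolding pr_def using no by auto
qed

lemma pr_nonplus:
  assumes v: "valid n k ii" and np: "\<not> (\<exists>j\<in>{1..k}. ii j = x \<and> (\<forall>j'\<in>{1..k}. ii j' \<noteq> Suc x))"
  shows "\<exists>\<tau> c. c \<le> 0 \<and> (\<forall>b. pr ii k T x d b = (if b = \<tau> then c else 0))"
proof (cases "\<exists>j\<in>{1..k}. ii j = Suc x")
  case True
  then obtain j where j: "j \<in> {1..k}" "ii j = Suc x" by blast
  show ?thesis
  proof (cases "\<exists>j1\<in>{1..k}. ii j1 = x")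
    case True
    then obtain j1 where j1: "j1 \<in> {1..k}" "ii j1 = x" by blast
    have jj: "j = Suc j1" using consec[OF v j1(1) j(1) j1(2) j(2)] .
    have e1: "(\<exists>j'\<in>{1..k}. ii j' = x \<and> b = T - int j' + d) = (b = T - int j1 + d)" for b
      using j1 inj_onD[OF valid_inj[OF v]] by metis
    have e2: "(\<exists>j'\<in>{1..k}. ii j' = Suc x \<and> b = T - int j' + d + 1) = (b = T - int j + d + 1)" for b
      using j inj_onD[OF valid_inj[OF v]] by metis
    have "pr ii k T x d b = 0" for b unfolding pr_def e1 e2 jj by simp
    thus ?thesis by (intro exI[of _ 0] exI[of _ 0]) simp
  next
    case False
    thus ?thesis using pr_minus[OF v j, of T d] by (intro exI[of _ "T - int j + d + 1"] exI[of _ "-1"]) auto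
  qed
next
  case False
  hence "\<forall>j\<in>{1..k}. ii j \<noteq> x" using np by blast
  hence "pr ii k T x d b = 0" for b using False unfolding pr_def by auto
  thus ?thesis by (intro exI[of _ 0] exI[of _ 0]) simp
qed

lemma col_supp:
  assumes v: "valid n k ii" and i: "1 \<le> i" "i \<le> n"
  shows "frow (col n k m ii i) {int k + m - int k .. int k + m + int n}"
proof -
  have "col n k m ii i b = 0" if b: "b \<notin> {int k + m - int k .. int k + m + int n}" for b
  proof -
    have "pr ii k (int k + m) x d b = 0" if d: "0 \<le> d" "d \<le> int n - 1" for x d
    proof -
      have "\<not> (\<exists>j\<in>{1..k}. ii j = x \<and> b = int k + m - int j + d)" using b d by auto
      moreover have "\<not> (\<exists>j\<in>{1..k}. ii j = Suc x \<and> b = int k + m - int j + d + 1)" using b d by auto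
      ultimately show ?thesis unfolding pr_def by simp
    qed
    thus ?thesis unfolding col_row[OF v i] using i by auto
  qed
  thus ?thesis unfolding frow_def by auto
qed

lemma eps_crit:
  assumes r: "\<And>b. y i b = (if b = t1 then c1 else 0) + (if b = t2 then c2 else 0)"
      and c: "(if k0 < t1 then c1 else 0) + (if k0 < t2 then c2 else 0) < (0::int)"
  shows "0 < eps y i"
proof -
  have fr: "frow (y i) {t1, t2}" unfolding frow_def using r by auto
  have "sum (y i) {j. k0 < j \<and> y i j \<noteq> 0} = sum (y i) {j\<in>{t1,t2}. k0 < j}"
    using sum_supp_eq[of "{t1,t2}" "y i" "\<lambda>j. k0 < j"] r by auto
  also have "\<dots> = (\<Sum>j\<in>{j\<in>{t1,t2}. k0 < j}. (if j = t1 then c1 else 0)) + (\<Sum>j\<in>{j\<in>{t1,t2}. k0 < j}. (if j = t2 then c2 else 0))"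
    unfolding r by (simp add: sum.distrib)
  also have "\<dots> = (if k0 < t1 then c1 else 0) + (if k0 < t2 then c2 else 0)" by (simp add: sum.delta')
  finally have tl: "sum (y i) {j. k0 < j \<and> y i j \<noteq> 0} < 0" using c by simp
  have "WT (y i) - PS (y i) k0 < 0" using tl tail_F[OF frow.finF[OF fr] frow.suppF[OF fr]] by simp
  moreover have "PS (y i) k0 \<le> phi y i" by (rule phi_ge[of y i, OF fr])
  ultimately show ?thesis using eps_r[of y i, OF fr] by simp
qed



lemma eps_nonneg: assumes fr: "frow (y i) F" shows "0 \<le> eps y i"
proof -
  obtain L H where "\<And>k. H \<le> k \<Longrightarrow> PS (y i) k = WT (y i)" using frow.bounds[OF fr] by blast
  hence "WT (y i) \<le> phi y i" using phi_ge[of y i F, OF fr, of H] by simp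
  thus ?thesis using eps_r[of y i F, OF fr] by simp
qed

lemma mmul_comm: "mmul x y = mmul y x" by (simp add: mmul_def fun_eq_iff add.commute)

definition meas :: "nat \<Rightarrow> (nat \<Rightarrow> nat) \<Rightarrow> nat" where
  "meas k ii = (\<Sum>j\<in>{1..k}. ii j)"

lemma sum_upd:
  fixes g :: "nat \<Rightarrow> nat \<Rightarrow> 'b::ab_group_add"
  assumes "j0 \<in> A" "finite A"
  shows "(\<Sum>j\<in>A. g ((ii(j0:=v)) j) j) = (\<Sum>j\<in>A. g (ii j) j) - g (ii j0) j0 + g v j0"
proof -
  have "(\<Sum>j\<in>A. g ((ii(j0:=v)) j) j) = g v j0 + (\<Sum>j\<in>A - {j0}. g ((ii(j0:=v)) j) j)"
    using sum.remove[OF assms(2) assms(1), where g="\<lambda>j. g ((ii(j0:=v)) j) j"] by simp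
  also have "(\<Sum>j\<in>A - {j0}. g ((ii(j0:=v)) j) j) = (\<Sum>j\<in>A - {j0}. g (ii j) j)" by (rule sum.cong) auto
  also have "(\<Sum>j\<in>A. g (ii j) j) = g (ii j0) j0 + (\<Sum>j\<in>A - {j0}. g (ii j) j)"
    using sum.remove[OF assms(2) assms(1), where g="\<lambda>j. g (ii j) j"] by simp
  ultimately show ?thesis by (simp add: algebra_simps)
qed

lemma meas_upd:
  assumes "j0 \<in> {1..k}"
  shows "meas k (ii(j0:=v)) + ii j0 = meas k ii + v"
proof -
  have "meas k (ii(j0:=v)) = v + (\<Sum>j\<in>{1..k} - {j0}. (ii(j0:=v)) j)"
    unfolding meas_def using sum.remove[OF finite_atLeastAtMost assms, where g="ii(j0:=v)"] by simp
  also have "(\<Sum>j\<in>{1..k} - {j0}. (ii(j0:=v)) j) = (\<Sum>j\<in>{1..k} - {j0}. ii j)" by (rule sum.cong) auto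
  also have "meas k ii = ii j0 + (\<Sum>j\<in>{1..k} - {j0}. ii j)"
    unfolding meas_def using sum.remove[OF finite_atLeastAtMost assms, where g=ii] by simp
  ultimately show ?thesis by (simp add: fun_upd_def)
qed

lemma valid_upd:
  assumes v: "valid n k ii" and j0: "j0 \<in> {1..k}" and vr: "1 \<le> w" "w \<le> 2 * n"
      and lo: "\<And>j. j \<in> {1..k} \<Longrightarrow> j < j0 \<Longrightarrow> ii j < w"
      and hi: "\<And>j. j \<in> {1..k} \<Longrightarrow> j0 < j \<Longrightarrow> w < ii j"
  shows "valid n k (ii(j0 := w))"
  unfolding valid_def
proof (intro conjI ballI)
  show "strict_mono_on {1..k} (ii(j0 := w))"
  proof (rule strict_mono_onI)
    fix r s assume rs: "r \<in> {1..k}" "s \<in> {1..k}" "r < s"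
    show "(ii(j0 := w)) r < (ii(j0 := w)) s"
    proof (cases "r = j0")
      case True thus ?thesis using rs hi by auto
    next
      case False
      show ?thesis
      proof (cases "s = j0")
        case True thus ?thesis using rs lo False by auto
      next
        case False2: False thus ?thesis using rs False valid_mono[OF v] by auto
      qed
    qed
  qed
  fix j assume "j \<in> {1..k}" thus "(ii(j0 := w)) j \<in> {1..2 * n}" using v vr unfolding valid_def by auto
qed

lemma col_upd:
  assumes j0: "j0 \<in> {1..k}"
  shows "col n k m (ii(j0 := w)) a' b = col n k m ii a' b - Xlet n (ii j0) (int k + m - int j0) a' b + Xlet n w (int k + m - int j0) a' b"
  unfolding col_def using sum_upd[OF j0 finite_atLeastAtMost, of "\<lambda>x j. Xlet n x (int k + m - int j) a' b" ii w] by simp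

lemma col_up:
  assumes v: "valid n k ii" and j0: "j0 \<in> {1..k}" "ii j0 = a" and a: "Suc a \<le> 2 * n"
    and no: "\<forall>j\<in>{1..k}. ii j \<noteq> Suc a" and n2: "2 \<le> n"
  shows "valid n k (ii(j0 := Suc a)) \<and>
    col n k m (ii(j0 := Suc a)) = mmul (col n k m ii) (minv (Amon n (rowof n a) (tau n a (int k + m - int j0))))"
proof
  have "ii j0 \<in> {1..2 * n}" using v j0(1) unfolding valid_def by blast
  hence a1: "1 \<le> a" using j0(2) by simp
  have a2': "a < 2 * n" using a by simp
  show "valid n k (ii(j0 := Suc a))"
  proof (rule valid_upd[OF v j0(1)])
    show "1 \<le> Suc a" "Suc a \<le> 2 * n" using a by auto
    fix j assume j: "j \<in> {1..k}"
    show "j < j0 \<Longrightarrow> ii j < Suc a" using valid_mono[OF v j j0(1)] j0 by auto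
    show "j0 < j \<Longrightarrow> Suc a < ii j" using valid_mono[OF v j0(1) j] j0 no j by fastforce
  qed
  show "col n k m (ii(j0 := Suc a)) = mmul (col n k m ii) (minv (Amon n (rowof n a) (tau n a (int k + m - int j0))))"
    unfolding fun_eq_iff col_upd[OF j0(1)] Xlet_shift[OF a1 a2' n2] using a j0 by (simp add: mmul_def minv_def)
qed

lemma col_down:
  assumes v: "valid n k ii" and j0: "j0 \<in> {1..k}" "ii j0 = Suc a" and a: "1 \<le> a"
    and no: "\<forall>j\<in>{1..k}. ii j \<noteq> a" and n2: "2 \<le> n"
  shows "valid n k (ii(j0 := a)) \<and> meas k (ii(j0 := a)) < meas k ii \<and>
    col n k m (ii(j0 := a)) = mmul (col n k m ii) (Amon n (rowof n a) (tau n a (int k + m - int j0)))"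
proof (intro conjI)
  have "ii j0 \<in> {1..2 * n}" using v j0(1) unfolding valid_def by blast
  hence a2: "Suc a \<le> 2 * n" using j0(2) by simp
  show "valid n k (ii(j0 := a))"
  proof (rule valid_upd[OF v j0(1)])
    show "1 \<le> a" "a \<le> 2 * n" using a a2 by auto
    fix j assume j: "j \<in> {1..k}"
    show "j < j0 \<Longrightarrow> ii j < a" using valid_mono[OF v j j0(1)] j0 no j by fastforce
    show "j0 < j \<Longrightarrow> a < ii j" using valid_mono[OF v j0(1) j] j0 by auto
  qed
  show "meas k (ii(j0 := a)) < meas k ii" using meas_upd[OF j0(1), of ii a] j0 by simp
  show "col n k m (ii(j0 := a)) = mmul (col n k m ii) (Amon n (rowof n a) (tau n a (int k + m - int j0)))"
  proof -
    have a2': "a < 2 * n" using a2 by simp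
    show ?thesis unfolding fun_eq_iff col_upd[OF j0(1)] j0(2) Xlet_shift[OF a a2' n2] by (simp add: mmul_def minv_def)
  qed
qed



lemma ftil_closed:
  assumes v: "valid n k ii" and i: "1 \<le> i" "i \<le> n" and n2: "2 \<le> n"
      and f: "ftil n i (col n k m ii) = Some M'"
  shows "\<exists>ii'. valid n k ii' \<and> M' = col n k m ii'"
proof -
  define y where "y = col n k m ii"
  define N where "N = nf y i"
  have fr: "frow (y i) {int k + m - int k .. int k + m + int n}" using col_supp[OF v i] unfolding y_def .
  have ph: "phi y i \<noteq> 0" and M': "M' = mmul (minv (Amon n i N)) y"
    using f unfolding y_def N_def by (auto simp: ftil_def split: if_splits)
  have pos: "0 < phi y i" using phi_nonneg[of y i, OF fr] ph by simp
  have "0 < y i N" using nf_facts(3)[OF fr pos] unfolding N_def .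
  hence "0 < pr ii k (int k + m) i 0 N \<or> (i < n \<and> 0 < pr ii k (int k + m) (2 * n - i) (int n - int i) N)"
    unfolding y_def col_row[OF v i] by (auto split: if_splits)
  thus ?thesis
  proof
    assume "0 < pr ii k (int k + m) i 0 N"
    then obtain j0 where j0: "j0 \<in> {1..k}" "ii j0 = i" "N = int k + m - int j0 + 0" and no: "\<forall>j'\<in>{1..k}. ii j' \<noteq> Suc i"
      using pr_pos[OF v] by blast
    have "Suc i \<le> 2 * n" using i n2 by simp
    from col_up[OF v j0(1,2) this no n2, of m]
    have "valid n k (ii(j0 := Suc i))" "col n k m (ii(j0 := Suc i)) = mmul y (minv (Amon n i N))"
      using i j0(3) unfolding y_def by (auto simp: rowof_def tau_def)
    thus ?thesis using M' mmul_comm by metis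
  next
    assume "i < n \<and> 0 < pr ii k (int k + m) (2 * n - i) (int n - int i) N"
    hence ilt: "i < n" and "0 < pr ii k (int k + m) (2 * n - i) (int n - int i) N" by auto
    then obtain j0 where j0: "j0 \<in> {1..k}" "ii j0 = 2 * n - i" "N = int k + m - int j0 + (int n - int i)"
      and no: "\<forall>j'\<in>{1..k}. ii j' \<noteq> Suc (2 * n - i)"
      using pr_pos[OF v] by blast
    have "Suc (2 * n - i) \<le> 2 * n" using i n2 by simp
    note cu = col_up[OF v j0(1,2) this no n2, of m]
    have tN: "tau n (2 * n - i) (int k + m - int j0) = N" using ilt i j0(3) by (simp add: tau_def of_nat_diff)
    have rN: "rowof n (2 * n - i) = i" using ilt by (auto simp: rowof_def)
    have "valid n k (ii(j0 := Suc (2 * n - i)))" "col n k m (ii(j0 := Suc (2 * n - i))) = mmul y (minv (Amon n i N))"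
      using cu unfolding y_def tN rN by auto
    thus ?thesis using M' mmul_comm by metis
  qed
qed

lemma etil_closed:
  assumes v: "valid n k ii" and i: "1 \<le> i" "i \<le> n" and n2: "2 \<le> n"
      and e: "etil n i (col n k m ii) = Some M'"
  shows "\<exists>ii'. valid n k ii' \<and> meas k ii' < meas k ii \<and> M' = col n k m ii'"
proof -
  define y where "y = col n k m ii"
  define N where "N = ne y i"
  have fr: "frow (y i) {int k + m - int k .. int k + m + int n}" using col_supp[OF v i] unfolding y_def .
  have ph: "eps y i \<noteq> 0" and M': "M' = mmul (Amon n i N) y"
    using e unfolding y_def N_def by (auto simp: etil_def split: if_splits)
  have pos: "0 < eps y i" using eps_nonneg[of y i, OF fr] ph by simp
  have "y i (N + 1) < 0" using ne_facts(3)[OF fr pos] unfolding N_def .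
  hence "pr ii k (int k + m) i 0 (N + 1) < 0 \<or> (i < n \<and> pr ii k (int k + m) (2 * n - i) (int n - int i) (N + 1) < 0)"
    unfolding y_def col_row[OF v i] by (auto split: if_splits)
  thus ?thesis
  proof
    assume "pr ii k (int k + m) i 0 (N + 1) < 0"
    then obtain j0 where j0: "j0 \<in> {1..k}" "ii j0 = Suc i" "N + 1 = int k + m - int j0 + 0 + 1" and no: "\<forall>j'\<in>{1..k}. ii j' \<noteq> i"
      using pr_neg[OF v] by blast
    from col_down[OF v j0(1,2) i(1) no n2, of m]
    have "valid n k (ii(j0 := i))" "meas k (ii(j0 := i)) < meas k ii" "col n k m (ii(j0 := i)) = mmul y (Amon n i N)"
      using i j0(3) unfolding y_def by (auto simp: rowof_def tau_def)
    thus ?thesis using M' mmul_comm by metis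
  next
    assume "i < n \<and> pr ii k (int k + m) (2 * n - i) (int n - int i) (N + 1) < 0"
    hence ilt: "i < n" and "pr ii k (int k + m) (2 * n - i) (int n - int i) (N + 1) < 0" by auto
    then obtain j0 where j0: "j0 \<in> {1..k}" "ii j0 = Suc (2 * n - i)" "N + 1 = int k + m - int j0 + (int n - int i) + 1"
      and no: "\<forall>j'\<in>{1..k}. ii j' \<noteq> 2 * n - i"
      using pr_neg[OF v] by blast
    have "1 \<le> 2 * n - i" using i ilt by simp
    note cd = col_down[OF v j0(1,2) this no n2, of m]
    have tN: "tau n (2 * n - i) (int k + m - int j0) = N" using ilt i j0(3) by (simp add: tau_def of_nat_diff)
    have rN: "rowof n (2 * n - i) = i" using ilt by (auto simp: rowof_def)
    have "valid n k (ii(j0 := 2 * n - i))" "meas k (ii(j0 := 2 * n - i)) < meas k ii" "col n k m (ii(j0 := 2 * n - i)) = mmul y (Amon n i N)"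
      using cd unfolding y_def tN rN by auto
    thus ?thesis using M' mmul_comm by metis
  qed
qed



lemma row_two:
  assumes v: "valid n k ii" and i: "1 \<le> i" "i < n"
    and p1: "\<And>b. pr ii k (int k + m) i 0 b = (if b = t1 then c1 else 0)"
    and p2: "\<And>b. pr ii k (int k + m) (2 * n - i) (int n - int i) b = (if b = t2 then c2 else 0)"
    and c: "(if k0 < t1 then c1 else 0) + (if k0 < t2 then c2 else 0) < (0::int)"
  shows "0 < eps (col n k m ii) i"
proof (rule eps_crit[OF _ c])
  fix b show "col n k m ii i b = (if b = t1 then c1 else 0) + (if b = t2 then c2 else 0)"
    using col_row[OF v i(1)] i p1 p2 by simp
qed

lemma row_n:
  assumes v: "valid n k ii" and n1: "1 \<le> n"
    and p1: "\<And>b. pr ii k (int k + m) n 0 b = (if b = t1 then c1 else 0)"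
    and c: "c1 < 0"
  shows "0 < eps (col n k m ii) n"
proof (rule eps_crit)
  fix b show "col n k m ii n b = (if b = t1 then c1 else 0) + (if b = t1 then 0 else 0)"
    using col_row[OF v n1] p1 by simp
  show "(if t1 - 1 < t1 then c1 else 0) + (if t1 - 1 < t1 then 0 else 0) < 0" using c by simp
qed

lemma valid_ge: assumes v: "valid n k ii" shows "j \<in> {1..k} \<Longrightarrow> j \<le> ii j"
proof (induction j)
  case 0 thus ?case by simp
next
  case (Suc j)
  show ?case
  proof (cases "j = 0")
    case True thus ?thesis using Suc.prems v unfolding valid_def by auto
  next
    case False
    hence "j \<in> {1..k}" using Suc.prems by auto
    hence "j \<le> ii j" "ii j < ii (Suc j)" using Suc.IH valid_mono[OF v _ Suc.prems] by auto
    thus ?thesis by simp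
  qed
qed

lemma run_lemma:
  assumes v: "valid n k ii" and j0: "j0 \<in> {1..k}" "ii j0 = Suc a" and a: "a < n" "1 \<le> a"
    and jb: "jb \<in> {1..k}" "ii jb = 2 * n - a" and hjb: "jb + a + 1 \<le> j0 + n"
  shows "\<exists>jl c. jl \<in> {1..k} \<and> 1 \<le> c \<and> c < n \<and> ii jl = Suc (2 * n - c)
      \<and> (\<forall>j\<in>{1..k}. ii j \<noteq> 2 * n - c) \<and> j0 < jl \<and> jl + c = jb + a + 1 \<and> jl \<le> jb"
proof -
  have "ii j0 < ii jb" using j0 jb a by simp
  hence j0b: "j0 < jb" using valid_le[OF v j0(1) jb(1)] by simp
  define P where "P j \<longleftrightarrow> j0 < j \<and> j \<le> jb \<and> (\<forall>j'\<in>{j..jb}. ii j' + (jb - j') = ii jb)" for j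
  have Pjb: "P jb" unfolding P_def using j0b by auto
  define jl where "jl = (LEAST j. P j)"
  have Pjl: "P jl" unfolding jl_def using Pjb by (rule LeastI)
  have jlmin: "\<And>j. P j \<Longrightarrow> jl \<le> j" unfolding jl_def by (rule Least_le)
  have jl: "j0 < jl" "jl \<le> jb" "ii jl + (jb - jl) = 2 * n - a" using Pjl jb unfolding P_def by auto
  have jlk: "jl \<in> {1..k}" using jl jb j0 by auto
  define c where "c = a + 1 + (jb - jl)"
  have c1: "1 \<le> c" unfolding c_def by simp
  have cn: "c < n" unfolding c_def using jl hjb a by linarith
  have "ii jl \<in> {1..2 * n}" using v jlk unfolding valid_def by blast
  hence "1 \<le> ii jl" by simp
  hence iijl: "ii jl = Suc (2 * n - c)" unfolding c_def using jl a by linarith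
  have sum: "jl + c = jb + a + 1" unfolding c_def using jl by linarith
  have no: "\<forall>j\<in>{1..k}. ii j \<noteq> 2 * n - c"
  proof (intro ballI notI)
    fix jx assume jx: "jx \<in> {1..k}" "ii jx = 2 * n - c"
    have jlx: "jl = Suc jx" using consec[OF v jx(1) jlk jx(2)] iijl by simp
    show False
    proof (cases "j0 < jx")
      case True
      have "P jx" unfolding P_def
      proof (intro conjI ballI)
        show "j0 < jx" by (rule True)
        show "jx \<le> jb" using jlx jl by simp
        fix j' assume j': "j' \<in> {jx..jb}"
        show "ii j' + (jb - j') = ii jb"
        proof (cases "j' = jx")
          case True thus ?thesis using jx iijl jlx jl jb by simp
        next
          case False
          hence "j' \<in> {jl..jb}" using j' jlx by auto
          thus ?thesis using Pjl unfolding P_def by blast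
        qed
      qed
      thus False using jlmin[of jx] jlx by simp
    next
      case False
      hence "jx = j0" using jlx jl by simp
      hence "Suc a = 2 * n - c" using jx j0 by simp
      thus False using cn a c_def jlx \<open>jx = j0\<close> hjb by linarith
    qed
  qed
  show ?thesis using jlk c1 cn iijl no jl(1) sum jl(2) by blast
qed

lemma hw_exists:
  assumes v: "valid n k ii" and n2: "2 \<le> n" and nid: "\<not> (\<forall>j\<in>{1..k}. ii j = j)"
  shows "\<exists>i\<in>{1..n}. 0 < eps (col n k m ii) i"
proof -
  define T where "T = int k + m"
  define j0 where "j0 = (LEAST j. j \<in> {1..k} \<and> ii j \<noteq> j)"
  have ex: "\<exists>j. j \<in> {1..k} \<and> ii j \<noteq> j" using nid by blast
  have j0: "j0 \<in> {1..k}" "ii j0 \<noteq> j0" using LeastI_ex[OF ex] unfolding j0_def by auto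
  have below: "\<And>j. j \<in> {1..k} \<Longrightarrow> j < j0 \<Longrightarrow> ii j = j"
    unfolding j0_def using not_less_Least by blast
  have gt: "j0 < ii j0" using valid_ge[OF v j0(1)] j0(2) by simp
  define a where "a = ii j0 - 1"
  have a: "ii j0 = Suc a" "j0 \<le> a" using gt unfolding a_def by auto
  have a1: "1 \<le> a" using a j0 by auto
  have "ii j0 \<in> {1..2 * n}" using v j0(1) unfolding valid_def by blast
  hence bb2n: "Suc a \<le> 2 * n" using a by simp
  have noa: "\<forall>j\<in>{1..k}. ii j \<noteq> a"
  proof (intro ballI notI)
    fix j assume j: "j \<in> {1..k}" "ii j = a"
    show False
    proof (cases "j < j0")
      case True thus False using below[OF j(1) True] j a by simp
    next
      case False
      show False
      proof (cases "j = j0")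
        case True thus False using j a by simp
      next
        case False2: False
        hence "j0 < j" using False by simp
        hence "ii j0 < ii j" using valid_mono[OF v j0(1) j(1)] by simp
        thus False using j a by simp
      qed
    qed
  qed
  have pa: "pr ii k T a d b = (if b = T - int j0 + d + 1 then -1 else 0)" for d b
    using pr_minus[OF v j0(1) a(1) noa] .
  consider (lt) "a < n" | (eq) "a = n" | (gt) "n < a" by linarith
  thus ?thesis
  proof cases
    case eq
    have "0 < eps (col n k m ii) n"
    proof (rule row_n[OF v])
      show "1 \<le> n" using n2 by simp
      show "\<And>b. pr ii k (int k + m) n 0 b = (if b = T - int j0 + 0 + 1 then -1 else 0)"
        using pa[of 0] eq T_def by simp
      show "(-1::int) < 0" by simp
    qed
    thus ?thesis using n2 by auto
  next
    case gt
    define c where "c = 2 * n - a"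
    have c: "1 \<le> c" "c < n" "2 * n - c = a" using gt bb2n unfolding c_def by auto
    have p2: "pr ii k T (2 * n - c) (int n - int c) b = (if b = T - int j0 + (int n - int c) + 1 then -1 else 0)" for b
      unfolding c(3) by (rule pa)
    show ?thesis
    proof (cases "\<exists>jc\<in>{1..k}. ii jc = c \<and> (\<forall>j'\<in>{1..k}. ii j' \<noteq> Suc c)")
      case True
      then obtain jc where jc: "jc \<in> {1..k}" "ii jc = c" and nsc: "\<forall>j'\<in>{1..k}. ii j' \<noteq> Suc c" by blast
      have "ii jc < ii j0" using jc a c gt by simp
      hence jcj0: "jc < j0" using valid_le[OF v jc(1) j0(1)] by simp
      hence jcc: "jc = c" using below[OF jc(1)] jc by simp
      have j0c: "j0 = Suc c"
      proof (rule ccontr)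
        assume "j0 \<noteq> Suc c"
        hence "Suc c < j0" using jcj0 jcc by simp
        hence "Suc c \<in> {1..k}" "ii (Suc c) = Suc c" using below[of "Suc c"] j0 by auto
        thus False using nsc by blast
      qed
      have p1: "pr ii k T c 0 b = (if b = T - int jc + 0 then 1 else 0)" for b
        by (rule pr_plus[OF v jc nsc])
      have "0 < eps (col n k m ii) c"
      proof (rule row_two[OF v c(1) c(2)])
        show "\<And>b. pr ii k (int k + m) c 0 b = (if b = T - int jc + 0 then 1 else 0)" using p1 T_def by simp
        show "\<And>b. pr ii k (int k + m) (2 * n - c) (int n - int c) b = (if b = T - int j0 + (int n - int c) + 1 then -1 else 0)"
          using p2 T_def by simp
        show "(if T - int j0 + (int n - int c) + 1 - 1 < T - int jc + 0 then 1 else 0)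
            + (if T - int j0 + (int n - int c) + 1 - 1 < T - int j0 + (int n - int c) + 1 then -1 else 0) < (0::int)"
          using j0c jcc c by simp
      qed
      thus ?thesis using c by auto
    next
      case False
      obtain t0 c0 where tc: "c0 \<le> 0" "\<And>b. pr ii k T c 0 b = (if b = t0 then c0 else 0)"
        using pr_nonplus[OF v False, of T 0] by blast
      have "0 < eps (col n k m ii) c"
      proof (rule row_two[OF v c(1) c(2)])
        show "\<And>b. pr ii k (int k + m) c 0 b = (if b = t0 then c0 else 0)" using tc T_def by simp
        show "\<And>b. pr ii k (int k + m) (2 * n - c) (int n - int c) b = (if b = T - int j0 + (int n - int c) + 1 then -1 else 0)"
          using p2 T_def by simp
        show "(if T - int j0 + (int n - int c) + 1 - 1 < t0 then c0 else 0)
            + (if T - int j0 + (int n - int c) + 1 - 1 < T - int j0 + (int n - int c) + 1 then -1 else 0) < (0::int)"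
          using tc(1) by simp
      qed
      thus ?thesis using c by auto
    qed
  next
    case lt
    have p1: "pr ii k T a 0 b = (if b = T - int j0 + 0 + 1 then -1 else 0)" for b by (rule pa)
    show ?thesis
    proof (cases "\<exists>jb\<in>{1..k}. ii jb = 2 * n - a \<and> (\<forall>j'\<in>{1..k}. ii j' \<noteq> Suc (2 * n - a))")
      case False
      obtain t0 c0 where tc: "c0 \<le> 0" "\<And>b. pr ii k T (2 * n - a) (int n - int a) b = (if b = t0 then c0 else 0)"
        using pr_nonplus[OF v False, of T "int n - int a"] by blast
      have "0 < eps (col n k m ii) a"
      proof (rule row_two[OF v a1 lt])
        show "\<And>b. pr ii k (int k + m) a 0 b = (if b = T - int j0 + 0 + 1 then -1 else 0)" using p1 T_def by simp
        show "\<And>b. pr ii k (int k + m) (2 * n - a) (int n - int a) b = (if b = t0 then c0 else 0)" using tc T_def by simp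
        show "(if T - int j0 + 0 + 1 - 1 < T - int j0 + 0 + 1 then -1 else 0)
            + (if T - int j0 + 0 + 1 - 1 < t0 then c0 else 0) < (0::int)" using tc(1) by simp
      qed
      thus ?thesis using a1 lt by auto
    next
      case True
      then obtain jb where jb: "jb \<in> {1..k}" "ii jb = 2 * n - a" and nsb: "\<forall>j'\<in>{1..k}. ii j' \<noteq> Suc (2 * n - a)" by blast
      have p2: "pr ii k T (2 * n - a) (int n - int a) b = (if b = T - int jb + (int n - int a) then 1 else 0)" for b
        by (rule pr_plus[OF v jb nsb])
      show ?thesis
      proof (cases "T - int jb + (int n - int a) < T - int j0 + 0 + 1")
        case True
        have "0 < eps (col n k m ii) a"
        proof (rule row_two[OF v a1 lt])
          show "\<And>b. pr ii k (int k + m) a 0 b = (if b = T - int j0 + 0 + 1 then -1 else 0)" using p1 T_def by simp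
          show "\<And>b. pr ii k (int k + m) (2 * n - a) (int n - int a) b = (if b = T - int jb + (int n - int a) then 1 else 0)"
            using p2 T_def by simp
          show "(if T - int j0 + 0 + 1 - 1 < T - int j0 + 0 + 1 then -1 else 0)
            + (if T - int j0 + 0 + 1 - 1 < T - int jb + (int n - int a) then 1 else 0) < (0::int)" using True by simp
        qed
        thus ?thesis using a1 lt by auto
      next
        case False
        hence hjb: "jb + a + 1 \<le> j0 + n" by linarith
        obtain jl c where jl: "jl \<in> {1..k}" "1 \<le> c" "c < n" "ii jl = Suc (2 * n - c)"
            "\<forall>j\<in>{1..k}. ii j \<noteq> 2 * n - c" "j0 < jl" "jl + c = jb + a + 1" "jl \<le> jb"
          using run_lemma[OF v j0(1) a(1) lt a1 jb hjb] by blast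
        have p2c: "pr ii k T (2 * n - c) (int n - int c) b = (if b = T - int jl + (int n - int c) + 1 then -1 else 0)" for b
          by (rule pr_minus[OF v jl(1) jl(4) jl(5)])
        have "0 < eps (col n k m ii) c"
        proof (cases "\<exists>jc\<in>{1..k}. ii jc = c \<and> (\<forall>j'\<in>{1..k}. ii j' \<noteq> Suc c)")
          case True
          then obtain jc where jc: "jc \<in> {1..k}" "ii jc = c" and nsc: "\<forall>j'\<in>{1..k}. ii j' \<noteq> Suc c" by blast
          have jbl: "jl \<le> jb" using jl(8) .
          have "j0 \<le> jc"
          proof (rule ccontr)
            assume "\<not> j0 \<le> jc"
            hence "ii jc < ii j0" using valid_mono[OF v jc(1) j0(1)] by simp
            thus False using jc a jl jbl by linarith
          qed
          have p1c: "pr ii k T c 0 b = (if b = T - int jc + 0 then 1 else 0)" for b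
            by (rule pr_plus[OF v jc nsc])
          show ?thesis
          proof (rule row_two[OF v jl(2) jl(3)])
            show "\<And>b. pr ii k (int k + m) c 0 b = (if b = T - int jc + 0 then 1 else 0)" using p1c T_def by simp
            show "\<And>b. pr ii k (int k + m) (2 * n - c) (int n - int c) b = (if b = T - int jl + (int n - int c) + 1 then -1 else 0)"
              using p2c T_def by simp
            show "(if T - int jl + (int n - int c) + 1 - 1 < T - int jc + 0 then 1 else 0)
              + (if T - int jl + (int n - int c) + 1 - 1 < T - int jl + (int n - int c) + 1 then -1 else 0) < (0::int)"
              using \<open>j0 \<le> jc\<close> jl(7) hjb by simp
          qed
        next
          case False
          obtain t0 c0 where tc: "c0 \<le> 0" "\<And>b. pr ii k T c 0 b = (if b = t0 then c0 else 0)"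
            using pr_nonplus[OF v False, of T 0] by blast
          show ?thesis
          proof (rule row_two[OF v jl(2) jl(3)])
            show "\<And>b. pr ii k (int k + m) c 0 b = (if b = t0 then c0 else 0)" using tc T_def by simp
            show "\<And>b. pr ii k (int k + m) (2 * n - c) (int n - int c) b = (if b = T - int jl + (int n - int c) + 1 then -1 else 0)"
              using p2c T_def by simp
            show "(if T - int jl + (int n - int c) + 1 - 1 < t0 then c0 else 0)
              + (if T - int jl + (int n - int c) + 1 - 1 < T - int jl + (int n - int c) + 1 then -1 else 0) < (0::int)"
              using tc(1) by simp
          qed
        qed
        thus ?thesis using jl(2,3) by auto
      qed
    qed
  qed
qed



lemma pr_id:
  assumes idd: "\<forall>j\<in>{1..k}. ii j = j" and x: "1 \<le> x"
  shows "pr ii k T x d b = (if x = k \<and> b = T - int k + d then 1 else 0)"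
proof -
  have e1: "(\<exists>j\<in>{1..k}. ii j = x \<and> b = T - int j + d) = (x \<le> k \<and> b = T - int x + d)"
    using idd x by force
  have e2: "(\<exists>j\<in>{1..k}. ii j = Suc x \<and> b = T - int j + d + 1) = (Suc x \<le> k \<and> b = T - int x + d)"
    using idd x by force
  show ?thesis unfolding pr_def e1 e2 by auto
qed

definition Ytgt :: "nat \<Rightarrow> nat \<Rightarrow> int \<Rightarrow> mono" where
  "Ytgt n k m = (if k \<le> n then Ymon n k m else Ymon n (2 * n - k) (m - int n + int k))"

lemma col_id:
  assumes v: "valid n k ii" and idd: "\<forall>j\<in>{1..k}. ii j = j" and k: "k \<in> {1..2 * n}"
  shows "col n k m ii = Ytgt n k m"
proof (intro ext)
  fix a b
  show "col n k m ii a b = Ytgt n k m a b"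
  proof (cases "a = 0 \<or> n < a")
    case True
    hence "col n k m ii a b = 0" unfolding col_def using Xlet_zero by simp
    moreover have "Ytgt n k m a b = 0" using True k unfolding Ytgt_def Ymon_def by auto
    ultimately show ?thesis by simp
  next
    case False
    hence a: "1 \<le> a" "a \<le> n" by auto
    have r: "col n k m ii a b = (if a = k \<and> b = m then 1 else 0)
        + (if a < n then (if 2 * n - a = k \<and> b = m + int n - int a then 1 else 0) else 0)"
      unfolding col_row[OF v a] pr_id[OF idd a(1)] using a pr_id[OF idd, of "2 * n - a"]
      by (auto simp: algebra_simps)
    show ?thesis unfolding r Ytgt_def Ymon_def using a k by (auto simp: of_nat_diff)
  qed
qed

lemma valid_id: "k \<le> 2 * n \<Longrightarrow> valid n k (\<lambda>j. j)"
  unfolding valid_def strict_mono_on_def by auto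

lemma comp_sub_Mk:
  assumes k: "k \<in> {1..2 * n}" and n2: "2 \<le> n"
  shows "M \<in> component n (Ytgt n k m) \<Longrightarrow> M \<in> Mk n k m"
proof (induction rule: component.induct)
  case base
  have vi: "valid n k (\<lambda>j. j)" using valid_id[of k n] k by simp
  have e: "Ytgt n k m = col n k m (\<lambda>j. j)" by (rule col_id[OF vi _ k, symmetric]) simp
  show ?case unfolding Mk_col mem_Collect_eq by (rule exI[of _ "\<lambda>j. j"]) (use e vi in simp)
next
  case (fstep M i M')
  then obtain ii where ii: "valid n k ii" "M = col n k m ii" unfolding Mk_col by blast
  show ?case using ftil_closed[OF ii(1) _ _ n2, of i m M'] fstep ii unfolding Mk_col by auto
next
  case (estep M i M')
  then obtain ii where ii: "valid n k ii" "M = col n k m ii" unfolding Mk_col by blast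
  show ?case using etil_closed[OF ii(1) _ _ n2, of i m M'] estep ii unfolding Mk_col by auto
qed

lemma Mk_sub_comp:
  assumes k: "k \<in> {1..2 * n}" and n2: "2 \<le> n"
  shows "valid n k ii \<Longrightarrow> col n k m ii \<in> component n (Ytgt n k m)"
proof (induction "meas k ii" arbitrary: ii rule: less_induct)
  case less
  show ?case
  proof (cases "\<forall>j\<in>{1..k}. ii j = j")
    case True
    thus ?thesis using col_id[OF less.prems True k] component.base by simp
  next
    case False
    obtain i where i: "i \<in> {1..n}" "0 < eps (col n k m ii) i" using hw_exists[OF less.prems n2 False] by blast
    define y where "y = col n k m ii"
    have e: "etil n i y = Some (mmul (Amon n i (ne y i)) y)" using i unfolding y_def etil_def by simp
    obtain ii' where ii': "valid n k ii'" "meas k ii' < meas k ii" "mmul (Amon n i (ne y i)) y = col n k m ii'"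
      using etil_closed[OF less.prems _ _ n2 e[unfolded y_def]] i unfolding y_def by auto
    have IH: "col n k m ii' \<in> component n (Ytgt n k m)" using less.hyps[OF ii'(2) ii'(1)] .
    have i12: "1 \<le> i" "i \<le> n" using i(1) by auto
    have "ftil n i (mmul (Amon n i (ne y i)) y) = Some y"
      unfolding y_def by (rule fe_inverse[where y="col n k m ii" and i=i, OF col_supp[OF less.prems i12, of m] i(2) i12 n2])
    hence "ftil n i (col n k m ii') = Some y" using ii'(3) by simp
    thus ?thesis using component.fstep[OF IH i(1)] unfolding y_def by blast
  qed
qed

lemma Mk_eq:
  assumes k: "k \<in> {1..2 * n}" and n2: "2 \<le> n"
  shows "Mk n k m = component n (Ytgt n k m)"
proof
  show "Mk n k m \<subseteq> component n (Ytgt n k m)" unfolding Mk_col using Mk_sub_comp[OF k n2] by blast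
  show "component n (Ytgt n k m) \<subseteq> Mk n k m" using comp_sub_Mk[OF k n2] by blast
qed

lemma closed_comp: "closed_sub n (component n Y)"
  unfolding closed_sub_def using component.fstep component.estep by blast

theorem lemma5p4:
  fixes n k :: nat and m :: int
  assumes "n \<ge> 2" and "k \<in> {1..2 * n}"
  shows "crystal_iso n (Mk n k m)
           (if k \<le> n then component n (Ymon n k m)
            else component n (Ymon n (2 * n - k) (m - int n + int k)))"
proof -
  have t: "(if k \<le> n then component n (Ymon n k m)
            else component n (Ymon n (2 * n - k) (m - int n + int k))) = component n (Ytgt n k m)"
    unfolding Ytgt_def by simp
  have M: "Mk n k m = component n (Ytgt n k m)" using Mk_eq[OF assms(2) assms(1)] .
  show ?thesis unfolding t M crystal_iso_def
    using closed_comp[of n "Ytgt n k m"] by (auto intro!: exI[of _ id] simp: option.map_id)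
qed

end
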